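(* Every complete multipartite graph with at least two nonempty parts admits an antimagic orientation.
   Context: A complete multipartite graph is a simple graph whose vertex set is partitioned into parts such that two vertices are adjacent if and only if they lie in different parts. For a digraph $D$ and an injective map $\tau$ from the arc set $A(D)$ to positive integers, $s_{(D,\tau)}(u)$ is the sum of labels of arcs entering $u$ minus the sum of labels of arcs leaving $u$ ($0$ if $u$ is isolated). If $D$ has $m$ arcs, a bijection $\tau:A(D)\to\{1,\dots,m\}$ is an antimagic labeling if the values $s_{(D,\tau)}(u)$ are pairwise distinct over all vertices. A graph admits an antimagic orientation if some orientation $D$ of it has an antimagic labeling. *)

theory Defs
  imports Main "HOL-Library.Disjoint_Sets"
begin

text \<open>Simple graphs are given by a vertex set V and a set E of 2-element subsets of V.\<close>

definition complete_multipartite_edges :: "'a set \<Rightarrow> 'a set set \<Rightarrow> 'a set set" where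
  "complete_multipartite_edges V P =
     {{u, v} | u v. u \<in> V \<and> v \<in> V \<and> (\<forall>X\<in>P. \<not> (u \<in> X \<and> v \<in> X))}"

definition is_orientation :: "'a set \<Rightarrow> 'a set set \<Rightarrow> ('a \<times> 'a) set \<Rightarrow> bool" where
  "is_orientation V E D \<longleftrightarrow>
     (\<forall>a\<in>D. {fst a, snd a} \<in> E) \<and>
     (\<forall>e\<in>E. \<exists>!a. a \<in> D \<and> e = {fst a, snd a})"

definition vertex_sum :: "('a \<times> 'a) set \<Rightarrow> ('a \<times> 'a \<Rightarrow> nat) \<Rightarrow> 'a \<Rightarrow> int" where
  "vertex_sum D \<tau> u =
     (\<Sum>a\<in>{a\<in>D. snd a = u}. int (\<tau> a)) - (\<Sum>a\<in>{a\<in>D. fst a = u}. int (\<tau> a))"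

definition antimagic_labeling :: "'a set \<Rightarrow> ('a \<times> 'a) set \<Rightarrow> ('a \<times> 'a \<Rightarrow> nat) \<Rightarrow> bool" where
  "antimagic_labeling V D \<tau> \<longleftrightarrow>
     bij_betw \<tau> D {1..card D} \<and> inj_on (vertex_sum D \<tau>) V"

definition has_antimagic_orientation :: "'a set \<Rightarrow> 'a set set \<Rightarrow> bool" where
  "has_antimagic_orientation V E \<longleftrightarrow>
     (\<exists>D \<tau>. is_orientation V E D \<and> antimagic_labeling V D \<tau>)"

end

theory Submission
  imports Defs
begin

lemma sorted_enum:
  fixes g :: "'a \<Rightarrow> int"
  assumes "finite B"
  shows "\<exists>ib. bij_betw ib B {..<card B} \<and> (\<forall>x\<in>B. \<forall>y\<in>B. ib x < ib y \<longrightarrow> g x \<le> g y)"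
proof -
  obtain xs where xs: "set xs = B" "distinct xs" using finite_distinct_list[OF assms] by blast
  define bs where "bs = sort_key g xs"
  have bs: "set bs = B" "distinct bs" "sorted (map g bs)" using xs by (auto simp: bs_def)
  have len: "length bs = card B" using bs distinct_card by fastforce
  have bij: "bij_betw ((!) bs) {..<card B} B" using bij_betw_nth[OF bs(2)] len bs(1) by simp
  define ib where "ib = inv_into {..<card B} ((!) bs)"
  have bij2: "bij_betw ib B {..<card B}" unfolding ib_def by (rule bij_betw_inv_into[OF bij])
  have inv: "bs ! (ib x) = x" if "x \<in> B" for x
    unfolding ib_def using bij that by (simp add: bij_betw_inv_into_right)
  have "g x \<le> g y" if "x \<in> B" "y \<in> B" "ib x < ib y" for x y
  proof -
    have "ib y < length bs" using bij2 that len by (auto simp: bij_betw_def)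
    then have "map g bs ! (ib x) \<le> map g bs ! (ib y)"
      using sorted_nth_mono[OF bs(3), of "ib x" "ib y"] that by simp
    then show ?thesis using \<open>ib y < length bs\<close> that inv by simp
  qed
  then show ?thesis using bij2 by blast
qed


theorem mainTheorem5:
  fixes V :: "'a set" and P :: "'a set set"
  assumes "finite V"
    and "partition_on V P"
    and "card P \<ge> 2"
  shows "has_antimagic_orientation V (complete_multipartite_edges V P)"
proof -
  note fin = assms(1) and part = assms(2)
  define E where "E = complete_multipartite_edges V P"
  have finP: "finite P" using assms(3) card.infinite by fastforce
  obtain A where A: "A \<in> P" using assms(3) by fastforce
  have "card (P - {A}) \<ge> 1" using assms(3) A finP by simp
  then have "P - {A} \<noteq> {}" by (metis card.empty not_one_le_zero)
  then obtain A' where A': "A' \<in> P" "A' \<noteq> A" by blast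
  have AV: "A \<subseteq> V" using A partition_onD1[OF part] by auto
  have A'V: "A' \<subseteq> V" using A' partition_onD1[OF part] by auto
  have Ane: "A \<noteq> {}" using A partition_onD3[OF part] by auto
  have A'ne: "A' \<noteq> {}" using A' partition_onD3[OF part] by auto
  have disj: "X \<inter> Y = {}" if "X \<in> P" "Y \<in> P" "X \<noteq> Y" for X Y
    using partition_onD2[OF part] that by (auto simp: disjoint_def)
  define B where "B = V - A"
  have Bne: "B \<noteq> {}" using A'V A'ne disj[OF A'(1) A A'(2)] unfolding B_def by blast
  have finA: "finite A" using AV fin finite_subset by blast
  have finB: "finite B" using fin B_def by simp
  define M where "M = card A"
  define N where "N = card B"
  have M1: "M \<ge> 1" using finA Ane M_def by (simp add: Suc_le_eq card_gt_0_iff)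
  have N1: "N \<ge> 1" using finB Bne N_def by (simp add: Suc_le_eq card_gt_0_iff)
  have VAB: "V = A \<union> B" "A \<inter> B = {}" using AV B_def by auto
  have cross_edge: "{a, b} \<in> E" if "a \<in> A" "b \<in> B" for a b
  proof -
    have "\<forall>X\<in>P. \<not> (a \<in> X \<and> b \<in> X)"
    proof (intro ballI notI)
      fix X assume X: "X \<in> P" "a \<in> X \<and> b \<in> X"
      then have "X = A" using disj[OF X(1) A] that by blast
      then show False using X that B_def by auto
    qed
    then show ?thesis unfolding E_def complete_multipartite_edges_def
      using that AV B_def by blast
  qed
  have edge_cases: "(\<exists>u v. e = {u, v} \<and> u \<noteq> v \<and> e \<subseteq> B) \<or> (\<exists>a\<in>A. \<exists>b\<in>B. e = {a, b})"
    if eE: "e \<in> E" for e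
  proof -
    obtain u v where uv: "e = {u, v}" "u \<in> V" "v \<in> V" "\<forall>X\<in>P. \<not> (u \<in> X \<and> v \<in> X)"
      using eE unfolding E_def complete_multipartite_edges_def by blast
    have "u \<noteq> v" using uv partition_onD1[OF part] by auto
    moreover have "\<not> (u \<in> A \<and> v \<in> A)" using uv(4) A by blast
    ultimately show ?thesis using uv VAB by blast
  qed
  have edge2: "\<exists>u v. e = {u, v} \<and> u \<noteq> v" if eE: "e \<in> E" for e
  proof -
    obtain u v where uv: "e = {u, v}" "u \<in> V" "v \<in> V" "\<forall>X\<in>P. \<not> (u \<in> X \<and> v \<in> X)"
      using eE unfolding E_def complete_multipartite_edges_def by blast
    have "u \<noteq> v" using uv partition_onD1[OF part] by auto
    then show ?thesis using uv by blast
  qed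
  have finE: "finite E"
  proof -
    have "E \<subseteq> Pow V" unfolding E_def complete_multipartite_edges_def by auto
    then show ?thesis using fin finite_subset by blast
  qed
  define pick where "pick = (\<lambda>e::'a set. SOME p. e = {fst p, snd p})"
  have pick: "{fst (pick e), snd (pick e)} = e" if "e = {u, v}" for e u v
  proof -
    have "\<exists>p. e = {fst p, snd p}" using that by (intro exI[of _ "(u,v)"]) simp
    then show ?thesis unfolding pick_def by (rule someI_ex[where P="\<lambda>p. e = {fst p, snd p}", symmetric])
  qed
  define EB where "EB = {e\<in>E. e \<subseteq> B}"
  define DB where "DB = pick ` EB"
  have finDB: "finite DB" unfolding DB_def EB_def using finE by simp
  have DB_edge: "{fst p, snd p} \<in> EB" if pD: "p \<in> DB" for p
  proof -
    obtain e where e: "e \<in> EB" "p = pick e" using pD DB_def by blast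
    then obtain u v where uv: "e = {u, v}" using edge2 unfolding EB_def by blast
    show ?thesis using pick[OF uv] e by simp
  qed
  have DB_B: "fst p \<in> B" "snd p \<in> B" if "p \<in> DB" for p
    using DB_edge[OF that] unfolding EB_def by auto
  have DB_ne: "fst p \<noteq> snd p" if pD: "p \<in> DB" for p
  proof -
    have "{fst p, snd p} \<in> E" using DB_edge[OF pD] unfolding EB_def by simp
    then obtain u v where "{fst p, snd p} = {u, v}" "u \<noteq> v"
      using edge2 by blast
    then show ?thesis by (metis doubleton_eq_iff)
  qed
  have DB_uniq: "p = q" if pq: "p \<in> DB" "q \<in> DB" "{fst p, snd p} = {fst q, snd q}" for p q
  proof -
    obtain e where e: "e \<in> EB" "p = pick e" using pq DB_def by blast
    obtain e' where e': "e' \<in> EB" "q = pick e'" using pq DB_def by blast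
    obtain u v where uv: "e = {u, v}" using edge2 e unfolding EB_def by blast
    have h1: "{fst p, snd p} = e" using pick[OF uv] e by simp
    obtain u' v' where uv': "e' = {u', v'}" using edge2 e' unfolding EB_def by blast
    have h2: "{fst q, snd q} = e'" using pick[OF uv'] e' by simp
    have "e = e'" using h1 h2 pq(3) by simp
    then show ?thesis using e e' by simp
  qed
  define mB where "mB = card DB"
  obtain \<tau>B where \<tau>B: "bij_betw \<tau>B DB {1..mB}"
    using finite_same_card_bij[OF finDB, of "{1..mB}"] unfolding mB_def by (simp, blast)
  define sB where "sB = vertex_sum DB \<tau>B"
  obtain ib where ib: "bij_betw ib B {..<N}" "\<forall>x\<in>B. \<forall>y\<in>B. ib x < ib y \<longrightarrow> sB x \<le> sB y"
    using sorted_enum[OF finB, of sB] unfolding N_def by blast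
  obtain ia where ia: "bij_betw ia A {..<M}"
    using finite_same_card_bij[OF finA, of "{..<M}"] unfolding M_def by (simp, blast)
  define D where "D = DB \<union> A \<times> B"
  define \<tau> where "\<tau> = (\<lambda>x. if x \<in> DB then \<tau>B x else mB + ia (fst x) * N + ib (snd x) + 1)"
  have orient: "is_orientation V E D"
    unfolding is_orientation_def
  proof (intro conjI ballI)
    fix x assume "x \<in> D"
    then show "{fst x, snd x} \<in> E" unfolding D_def
    proof
      assume "x \<in> DB" then show ?thesis using DB_edge unfolding EB_def by blast
    next
      assume "x \<in> A \<times> B" then show ?thesis using cross_edge by auto
    qed
  next
    fix e assume eE: "e \<in> E"
    from edge_cases[OF eE] show "\<exists>!a. a \<in> D \<and> e = {fst a, snd a}"
    proof
      assume "\<exists>u v. e = {u, v} \<and> u \<noteq> v \<and> e \<subseteq> B"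
      then obtain u v where uv: "e = {u,v}" "e \<subseteq> B" by blast
      have eEB: "e \<in> EB" using eE uv unfolding EB_def by simp
      have pDB: "pick e \<in> DB" using eEB DB_def by blast
      have pe: "e = {fst (pick e), snd (pick e)}" using pick[OF uv(1)] by simp
      show ?thesis
      proof (rule ex1I[of _ "pick e"])
        show "pick e \<in> D \<and> e = {fst (pick e), snd (pick e)}" using pDB pe D_def by simp
      next
        fix y assume y: "y \<in> D \<and> e = {fst y, snd y}"
        have "y \<in> DB"
        proof (rule ccontr)
          assume "y \<notin> DB"
          then have "fst y \<in> A" using y D_def by auto
          moreover have "fst y \<in> B" using y uv(2) by auto
          ultimately show False using VAB(2) by blast
        qed
        then show "y = pick e" using DB_uniq[OF _ pDB] y pe by metis
      qed
    next
      assume "\<exists>a\<in>A. \<exists>b\<in>B. e = {a, b}"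
      then obtain a b where ab: "a \<in> A" "b \<in> B" "e = {a,b}" by blast
      show ?thesis
      proof (rule ex1I[of _ "(a,b)"])
        show "(a,b) \<in> D \<and> e = {fst (a,b), snd (a,b)}" using ab D_def by simp
      next
        fix y assume y: "y \<in> D \<and> e = {fst y, snd y}"
        have "y \<notin> DB"
        proof
          assume "y \<in> DB"
          then have "fst y \<in> B" "snd y \<in> B" using DB_B by auto
          moreover have "a \<in> {fst y, snd y}" using y ab(3) by (metis insertI1)
          ultimately have "a \<in> B" by blast
          then show False using ab VAB(2) by blast
        qed
        then have yAB: "fst y \<in> A" "snd y \<in> B" using y D_def by auto
        have "fst y \<noteq> b" using yAB ab VAB(2) by blast
        moreover have "snd y \<noteq> a" using yAB ab VAB(2) by blast
        moreover have "{fst y, snd y} = {a, b}" using y ab by simp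
        ultimately have "fst y = a" "snd y = b" by (auto simp: doubleton_eq_iff)
        then show "y = (a,b)" by (simp add: prod_eq_iff)
      qed
    qed
  qed
  have ABnDB: "x \<notin> DB" if xAB: "x \<in> A \<times> B" for x
  proof
    assume "x \<in> DB"
    then have "fst x \<in> B" by (rule DB_B)
    moreover have "fst x \<in> A" using xAB by auto
    ultimately show False using VAB(2) by blast
  qed
  have \<tau>B_rng: "\<tau>B x \<in> {1..mB}" if "x \<in> DB" for x
    using \<tau>B that by (auto simp: bij_betw_def)
  have ia_lt: "ia a < M" if "a \<in> A" for a using ia that by (auto simp: bij_betw_def)
  have ib_lt: "ib b < N" if "b \<in> B" for b using ib(1) that by (auto simp: bij_betw_def)
  have cross_le: "ia a * N + ib b < M * N" if "a \<in> A" "b \<in> B" for a b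
  proof -
    have "ia a * N + ib b < ia a * N + N" using ib_lt[OF that(2)] by simp
    also have "\<dots> = (ia a + 1) * N" by simp
    also have "\<dots> \<le> M * N" using ia_lt[OF that(1)] by (intro mult_le_mono1) simp
    finally show ?thesis .
  qed
  have finD: "finite D" unfolding D_def using finDB finA finB by simp
  have cardD: "card D = mB + M * N"
    unfolding D_def mB_def M_def N_def
    using finDB finA finB ABnDB by (subst card_Un_disjoint) (auto simp: card_cartesian_product)
  have injD: "inj_on \<tau> D"
  proof (rule inj_onI)
    fix x y assume x: "x \<in> D" and y: "y \<in> D" and eq: "\<tau> x = \<tau> y"
    show "x = y"
    proof (cases "x \<in> DB")
      case True
      show ?thesis
      proof (cases "y \<in> DB")
        case True
        have "inj_on \<tau>B DB" using \<tau>B by (simp add: bij_betw_def)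
        moreover have "\<tau>B x = \<tau>B y" using True \<open>x \<in> DB\<close> eq unfolding \<tau>_def by simp
        ultimately show ?thesis using True \<open>x \<in> DB\<close> by (auto dest: inj_onD)
      next
        case False
        then show ?thesis using \<tau>B_rng[OF \<open>x \<in> DB\<close>] eq \<open>x \<in> DB\<close> unfolding \<tau>_def by auto
      qed
    next
      case False
      then have xAB: "x \<in> A \<times> B" using x D_def by auto
      show ?thesis
      proof (cases "y \<in> DB")
        case True
        then show ?thesis using \<tau>B_rng[OF \<open>y \<in> DB\<close>] eq \<open>x \<notin> DB\<close> unfolding \<tau>_def by auto
      next
        case False
        then have yAB: "y \<in> A \<times> B" using y D_def by auto
        have e1: "ia (fst x) * N + ib (snd x) = ia (fst y) * N + ib (snd y)"
          using eq \<open>x \<notin> DB\<close> False unfolding \<tau>_def by simp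
        have lx: "ib (snd x) < N" "ib (snd y) < N" using ib_lt xAB yAB by auto
        have "(ia (fst x) * N + ib (snd x)) div N = ia (fst x)" using lx by simp
        moreover have "(ia (fst y) * N + ib (snd y)) div N = ia (fst y)" using lx by simp
        ultimately have "ia (fst x) = ia (fst y)" using e1 by simp
        moreover have "inj_on ia A" using ia by (simp add: bij_betw_def)
        ultimately have f: "fst x = fst y" using xAB yAB by (auto dest: inj_onD)
        then have "ib (snd x) = ib (snd y)" using e1 by simp
        moreover have "inj_on ib B" using ib(1) by (simp add: bij_betw_def)
        ultimately have "snd x = snd y" using xAB yAB by (auto dest: inj_onD)
        then show ?thesis using f by (simp add: prod_eq_iff)
      qed
    qed
  qed
  have imgD: "\<tau> ` D \<subseteq> {1..card D}"
  proof
    fix z assume "z \<in> \<tau> ` D"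
    then obtain x where x: "x \<in> D" "z = \<tau> x" by blast
    show "z \<in> {1..card D}"
    proof (cases "x \<in> DB")
      case True
      then show ?thesis using \<tau>B_rng[OF True] x cardD unfolding \<tau>_def by auto
    next
      case False
      then have "x \<in> A \<times> B" using x D_def by auto
      then have "ia (fst x) * N + ib (snd x) < M * N" using cross_le by auto
      then show ?thesis using False x cardD unfolding \<tau>_def by auto
    qed
  qed
  have lab: "bij_betw \<tau> D {1..card D}"
  proof -
    have "card (\<tau> ` D) = card {1..card D}" using card_image[OF injD] by simp
    then have "\<tau> ` D = {1..card D}" using imgD by (intro card_subset_eq) auto
    then show ?thesis using injD by (simp add: bij_betw_def)
  qed
  define K where "K = (\<Sum>a\<in>A. int (mB + ia a * N + 1))"
  define L where "L = (\<Sum>b\<in>B. int (mB + ib b + 1))"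
  have \<tau>_DB: "\<tau> x = \<tau>B x" if "x \<in> DB" for x using that \<tau>_def by simp
  have \<tau>_AB: "\<tau> (a, b) = mB + ia a * N + ib b + 1" if "a \<in> A" "b \<in> B" for a b
    using that ABnDB \<tau>_def by auto
  have vsB: "vertex_sum D \<tau> b = sB b + K + int M * int (ib b)" if bB: "b \<in> B" for b
  proof -
    have in_eq: "{x\<in>D. snd x = b} = {x\<in>DB. snd x = b} \<union> (\<lambda>a. (a, b)) ` A"
      unfolding D_def using bB by auto
    have out_eq: "{x\<in>D. fst x = b} = {x\<in>DB. fst x = b}"
      unfolding D_def using bB VAB(2) by auto
    have dj: "{x\<in>DB. snd x = b} \<inter> (\<lambda>a. (a, b)) ` A = {}" using ABnDB bB by auto
    have s1: "(\<Sum>x\<in>{x\<in>D. snd x = b}. int (\<tau> x))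
        = (\<Sum>x\<in>{x\<in>DB. snd x = b}. int (\<tau>B x)) + (\<Sum>a\<in>A. int (\<tau> (a, b)))"
    proof -
      have "(\<Sum>x\<in>{x\<in>D. snd x = b}. int (\<tau> x))
          = (\<Sum>x\<in>{x\<in>DB. snd x = b}. int (\<tau> x)) + (\<Sum>x\<in>(\<lambda>a. (a, b)) ` A. int (\<tau> x))"
        unfolding in_eq using finDB finA dj by (intro sum.union_disjoint) auto
      also have "(\<Sum>x\<in>{x\<in>DB. snd x = b}. int (\<tau> x)) = (\<Sum>x\<in>{x\<in>DB. snd x = b}. int (\<tau>B x))"
        using \<tau>_DB by (intro sum.cong) auto
      also have "(\<Sum>x\<in>(\<lambda>a. (a, b)) ` A. int (\<tau> x)) = (\<Sum>a\<in>A. int (\<tau> (a, b)))"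
        by (subst sum.reindex) (auto simp: inj_on_def)
      finally show ?thesis .
    qed
    have s2: "(\<Sum>x\<in>{x\<in>D. fst x = b}. int (\<tau> x)) = (\<Sum>x\<in>{x\<in>DB. fst x = b}. int (\<tau>B x))"
      unfolding out_eq using \<tau>_DB by (intro sum.cong) auto
    have s3: "(\<Sum>a\<in>A. int (\<tau> (a, b))) = K + int M * int (ib b)"
    proof -
      have "(\<Sum>a\<in>A. int (\<tau> (a, b))) = (\<Sum>a\<in>A. int (mB + ia a * N + 1) + int (ib b))"
        using \<tau>_AB bB by (intro sum.cong) auto
      also have "\<dots> = K + int M * int (ib b)"
        unfolding K_def M_def by (simp add: sum.distrib)
      finally show ?thesis .
    qed
    show ?thesis unfolding vertex_sum_def sB_def using s1 s2 s3 by simp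
  qed
  have vsA: "vertex_sum D \<tau> a = - (L + int N * int (ia a * N))" if aA: "a \<in> A" for a
  proof -
    have in_eq: "{x\<in>D. snd x = a} = {}"
      unfolding D_def using aA VAB(2) DB_B by fastforce
    have out_eq: "{x\<in>D. fst x = a} = (\<lambda>b. (a, b)) ` B"
      unfolding D_def using aA VAB(2) DB_B by fastforce
    have "(\<Sum>x\<in>{x\<in>D. fst x = a}. int (\<tau> x)) = (\<Sum>b\<in>B. int (\<tau> (a, b)))"
      unfolding out_eq by (subst sum.reindex) (auto simp: inj_on_def)
    also have "\<dots> = (\<Sum>b\<in>B. int (mB + ib b + 1) + int (ia a * N))"
      using \<tau>_AB aA by (intro sum.cong) auto
    also have "\<dots> = L + int N * int (ia a * N)"
      unfolding L_def N_def by (simp add: sum.distrib)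
    finally show ?thesis unfolding vertex_sum_def in_eq by simp
  qed
  have K0: "K \<ge> 0" unfolding K_def by (intro sum_nonneg) auto
  have Lb: "L \<ge> int N * int (mB + 1)"
  proof -
    have "(\<Sum>b\<in>B. int (mB + 1)) \<le> L" unfolding L_def by (intro sum_mono) auto
    then show ?thesis by (simp add: N_def)
  qed
  have sBb: "sB b \<ge> - (int (N - 1) * int mB)" if bB: "b \<in> B" for b
  proof -
    define Ob where "Ob = {x\<in>DB. fst x = b}"
    have cO: "card Ob \<le> N - 1"
    proof -
      have "inj_on snd Ob" unfolding Ob_def
      proof (rule inj_onI)
        fix x y assume x: "x \<in> {x\<in>DB. fst x = b}" and y: "y \<in> {x\<in>DB. fst x = b}" and "snd x = snd y"
        then have "{fst x, snd x} = {fst y, snd y}" by simp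
        then show "x = y" using DB_uniq x y by blast
      qed
      moreover have "snd ` Ob \<subseteq> B - {b}" unfolding Ob_def using DB_B DB_ne by fastforce
      ultimately have "card Ob \<le> card (B - {b})"
        using finB by (metis card_image card_mono finite_Diff)
      then show ?thesis using bB finB N_def by simp
    qed
    have "(\<Sum>x\<in>Ob. int (\<tau>B x)) \<le> (\<Sum>x\<in>Ob. int mB)"
      using \<tau>B_rng unfolding Ob_def by (intro sum_mono) auto
    also have "\<dots> = int (card Ob) * int mB" by simp
    also have "\<dots> \<le> int (N - 1) * int mB" using cO by (intro mult_right_mono) auto
    finally have h: "(\<Sum>x\<in>Ob. int (\<tau>B x)) \<le> int (N - 1) * int mB" .
    have "(\<Sum>x\<in>{x\<in>DB. snd x = b}. int (\<tau>B x)) \<ge> 0" by (intro sum_nonneg) auto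
    then show ?thesis using h unfolding sB_def vertex_sum_def Ob_def by linarith
  qed
  have AltB: "vertex_sum D \<tau> a < vertex_sum D \<tau> b" if "a \<in> A" "b \<in> B" for a b
  proof -
    have "vertex_sum D \<tau> a \<le> - (int N * int (mB + 1))"
    proof -
      have "int N * int (ia a * N) \<ge> 0" by simp
      then show ?thesis using vsA[OF that(1)] Lb by linarith
    qed
    also have "\<dots> < - (int (N - 1) * int mB)"
      using N1 by (simp add: of_nat_diff algebra_simps)
    also have "\<dots> \<le> vertex_sum D \<tau> b"
    proof -
      have "int M * int (ib b) \<ge> 0" by simp
      then show ?thesis using vsB[OF that(2)] sBb[OF that(2)] K0 by linarith
    qed
    finally show ?thesis .
  qed
  have Bmono: "vertex_sum D \<tau> x < vertex_sum D \<tau> y" if "x \<in> B" "y \<in> B" "ib x < ib y" for x y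
  proof -
    have "sB x \<le> sB y" using ib(2) that by blast
    moreover have "int M * int (ib x) < int M * int (ib y)" using M1 that(3) by simp
    ultimately show ?thesis using vsB that by simp
  qed
  have injV: "inj_on (vertex_sum D \<tau>) V"
  proof (rule inj_onI)
    fix x y assume x: "x \<in> V" and y: "y \<in> V" and eq: "vertex_sum D \<tau> x = vertex_sum D \<tau> y"
    show "x = y"
    proof (cases "x \<in> A")
      case xA: True
      show ?thesis
      proof (cases "y \<in> A")
        case yA: True
        have "int N * int (ia x * N) = int N * int (ia y * N)" using eq vsA xA yA by simp
        then have "ia x = ia y" using N1 by simp
        moreover have "inj_on ia A" using ia by (simp add: bij_betw_def)
        ultimately show ?thesis using xA yA by (auto dest: inj_onD)
      next
        case False
        then have "y \<in> B" using y VAB by blast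
        then show ?thesis using AltB[OF xA] eq by fastforce
      qed
    next
      case False
      then have xB: "x \<in> B" using x VAB by blast
      show ?thesis
      proof (cases "y \<in> A")
        case True
        then show ?thesis using AltB[OF True xB] eq by fastforce
      next
        case False
        then have yB: "y \<in> B" using y VAB by blast
        have "ib x = ib y"
        proof (rule ccontr)
          assume "ib x \<noteq> ib y"
          then have "ib x < ib y \<or> ib y < ib x" by arith
          then show False using Bmono xB yB eq by fastforce
        qed
        moreover have "inj_on ib B" using ib(1) by (simp add: bij_betw_def)
        ultimately show ?thesis using xB yB by (auto dest: inj_onD)
      qed
    qed
  qed
  show ?thesis unfolding has_antimagic_orientation_def antimagic_labeling_def E_def[symmetric]
    using orient lab injV by blast
qed

end
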